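(* Let $p\in\mathbb Z\{x_1,\dots,x_m\}$ be a polynomial identity of the ring $M_n(\mathbb Z)$. Write $p=f-g$ where $f\in\mathbb N\{x_1,\dots,x_m\}$ is the sum of the terms of $p$ with positive coefficient and $g\in\mathbb N\{x_1,\dots,x_m\}$ is the negative of the sum of the terms of $p$ with negative coefficient. Then $(f,g)$ is a semiring$^\dagger$ polynomial identity of $M_n(R)$ for every commutative semiring$^\dagger$ $R$.
   Context: A semiring$^\dagger$ $(R,+,\cdot,1)$ is a set with binary operations such that $(R,+)$ is an abelian semigroup, $(R,\cdot,1)$ is a monoid, and multiplication distributes over addition (no zero element required). $\mathbb Z\{x_1,\dots,x_m\}$ (resp. $\mathbb N\{x_1,\dots,x_m\}$) is the free associative algebra (resp. free $\mathbb N$-semiring$^\dagger$, the monoid semiring over $\mathbb N$ of the free word monoid) on noncommuting indeterminates. $p$ is a polynomial identity of a ring $S$ if $p(r_1,\dots,r_m)=0$ for all $r_i\in S$. A pair $(f,g)$ is a semiring$^\dagger$ polynomial identity of a semiring$^\dagger$ $S$ if $f(r_1,\dots,r_m)=g(r_1,\dots,r_m)$ for all $r_i\in S$. $M_n(R)$ denotes $n\times n$ matrices with the usual operations. *)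

theory Defs
  imports Main "HOL-Library.List_Lexorder"
begin

(* Noncommutative polynomials in x_0,...,x_{m-1}: finitely supported coefficient
   functions on words (nat list); the word [a1,...,ak] stands for x_a1 ... x_ak.
   n x n matrices over a type 'a: functions nat => nat => 'a, only entries i,j < n matter. *)

type_synonym 'a mat = "nat \<Rightarrow> nat \<Rightarrow> 'a"

definition is_poly :: "nat \<Rightarrow> (nat list \<Rightarrow> 'c::zero) \<Rightarrow> bool" where
  "is_poly m p \<longleftrightarrow> finite {w. p w \<noteq> 0} \<and> (\<forall>w. p w \<noteq> 0 \<longrightarrow> set w \<subseteq> {..<m})"

definition mat_eq :: "nat \<Rightarrow> 'a mat \<Rightarrow> 'a mat \<Rightarrow> bool" where
  "mat_eq n A B \<longleftrightarrow> (\<forall>i<n. \<forall>j<n. A i j = B i j)"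

definition imat_mult :: "nat \<Rightarrow> int mat \<Rightarrow> int mat \<Rightarrow> int mat" where
  "imat_mult n A B = (\<lambda>i j. \<Sum>k<n. A i k * B k j)"

definition imat_one :: "int mat" where
  "imat_one = (\<lambda>i j. if i = j then 1 else 0)"

definition imono :: "nat \<Rightarrow> (nat \<Rightarrow> int mat) \<Rightarrow> nat list \<Rightarrow> int mat" where
  "imono n X w = foldr (\<lambda>a M. imat_mult n (X a) M) w imat_one"

definition ieval :: "nat \<Rightarrow> (nat list \<Rightarrow> int) \<Rightarrow> (nat \<Rightarrow> int mat) \<Rightarrow> int mat" where
  "ieval n p X = (\<lambda>i j. \<Sum>w\<in>{w. p w \<noteq> 0}. p w * imono n X w i j)"

definition is_PI_Mn_Z :: "nat \<Rightarrow> nat \<Rightarrow> (nat list \<Rightarrow> int) \<Rightarrow> bool" where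
  "is_PI_Mn_Z m n p \<longleftrightarrow> is_poly m p \<and> (\<forall>X. mat_eq n (ieval n p X) (\<lambda>_ _. 0))"

fun nsum :: "'a::ab_semigroup_add list \<Rightarrow> 'a" where
  "nsum [] = undefined"
| "nsum [x] = x"
| "nsum (x # y # xs) = x + nsum (y # xs)"

definition smat_add :: "'a::ab_semigroup_add mat \<Rightarrow> 'a mat \<Rightarrow> 'a mat" where
  "smat_add A B = (\<lambda>i j. A i j + B i j)"

definition smat_mult :: "nat \<Rightarrow> 'a::comm_semiring mat \<Rightarrow> 'a mat \<Rightarrow> 'a mat" where
  "smat_mult n A B = (\<lambda>i j. nsum (map (\<lambda>k. A i k * B k j) [0..<n]))"

(* c-fold sum of a matrix, c >= 1 *)
definition smat_nat_smult :: "nat \<Rightarrow> 'a::ab_semigroup_add mat \<Rightarrow> 'a mat" where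
  "smat_nat_smult c A = (\<lambda>i j. nsum (replicate c (A i j)))"

(* monomial of a nonempty word; the empty word (constant term) would need an identity
   matrix, which does not exist without zero; it never occurs for identities of M_n(Z), n>=1 *)
fun smono :: "nat \<Rightarrow> (nat \<Rightarrow> 'a::comm_semiring mat) \<Rightarrow> nat list \<Rightarrow> 'a mat" where
  "smono n X [] = undefined"
| "smono n X [a] = X a"
| "smono n X (a # b # w) = smat_mult n (X a) (smono n X (b # w))"

definition seval :: "nat \<Rightarrow> (nat list \<Rightarrow> nat) \<Rightarrow> (nat \<Rightarrow> 'a::comm_semiring mat) \<Rightarrow> 'a mat" where
  "seval n q X = (\<lambda>i j. nsum (map (\<lambda>w. smat_nat_smult (q w) (smono n X w) i j)
                                  (sorted_list_of_set {w. q w \<noteq> 0})))"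

definition is_sPI_Mn :: "nat \<Rightarrow> (nat list \<Rightarrow> nat) \<Rightarrow> (nat list \<Rightarrow> nat) \<Rightarrow> 'a::{comm_semiring, comm_monoid_mult} itself \<Rightarrow> bool" where
  "is_sPI_Mn n f g _ \<longleftrightarrow> (\<forall>X :: nat \<Rightarrow> 'a mat. mat_eq n (seval n f X) (seval n g X))"

definition pos_part :: "(nat list \<Rightarrow> int) \<Rightarrow> nat list \<Rightarrow> nat" where
  "pos_part p = (\<lambda>w. nat (p w))"

definition neg_part :: "(nat list \<Rightarrow> int) \<Rightarrow> nat list \<Rightarrow> nat" where
  "neg_part p = (\<lambda>w. nat (- p w))"

end

theory Submission
  imports Defs "HOL-Computational_Algebra.Polynomial"
begin

lemma nsum_Cons: "xs \<noteq> [] \<Longrightarrow> nsum (x # xs) = x + nsum xs"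
  by (cases xs) auto

lemma nsum_append:
  "xs \<noteq> [] \<Longrightarrow> ys \<noteq> [] \<Longrightarrow> nsum (xs @ ys) = nsum xs + nsum ys"
proof (induction xs)
  case Nil then show ?case by simp
next
  case (Cons x xs)
  show ?case
  proof (cases "xs = []")
    case True then show ?thesis using Cons by (simp add: nsum_Cons)
  next
    case False then show ?thesis using Cons by (simp add: nsum_Cons add.assoc)
  qed
qed

lemma nsum_concat:
  "xss \<noteq> [] \<Longrightarrow> (\<forall>xs\<in>set xss. xs \<noteq> []) \<Longrightarrow> nsum (concat xss) = nsum (map nsum xss)"
proof (induction xss)
  case Nil then show ?case by simp
next
  case (Cons xs xss)
  show ?case
  proof (cases "xss = []")
    case True then show ?thesis by simp
  next
    case False
    then have "concat xss \<noteq> []" using Cons.prems by (cases xss) auto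
    then show ?thesis using Cons False
      by (simp add: nsum_append nsum_Cons)
  qed
qed

lemma nsum_mult:
  fixes c :: "'a::comm_semiring"
  shows "xs \<noteq> [] \<Longrightarrow> c * nsum xs = nsum (map ((*) c) xs)"
proof (induction xs)
  case Nil then show ?case by simp
next
  case (Cons x xs)
  then show ?case by (cases "xs = []") (auto simp: nsum_Cons distrib_left)
qed

lemma nsum_remove:
  "x \<in> set ys \<Longrightarrow> length ys \<ge> 2 \<Longrightarrow> nsum ys = x + nsum (remove1 x ys)"
proof (induction ys)
  case Nil then show ?case by simp
next
  case (Cons y ys)
  show ?case
  proof (cases "y = x")
    case True
    then have "ys \<noteq> []" using Cons.prems by auto
    then show ?thesis using True by (simp add: nsum_Cons)
  next
    case False
    then have xin: "x \<in> set ys" using Cons.prems by auto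
    show ?thesis
    proof (cases "length ys \<ge> 2")
      case True
      have ne: "remove1 x ys \<noteq> []" using True xin length_remove1[of x ys]
        by (cases "remove1 x ys") auto
      have "nsum (y # ys) = y + nsum ys" using xin by (cases ys) auto
      also have "\<dots> = y + (x + nsum (remove1 x ys))"
        using Cons.IH[OF xin True] by simp
      also have "\<dots> = x + (y + nsum (remove1 x ys))" by (simp add: add.left_commute)
      finally show ?thesis using False ne by (simp add: nsum_Cons)
    next
      case False2: False
      then have "ys = [x]" using xin
        by (cases ys) (auto simp: Suc_le_eq)
      then show ?thesis using False by (simp add: add.commute)
    qed
  qed
qed

lemma nsum_perm: "mset xs = mset ys \<Longrightarrow> nsum xs = nsum ys"
proof (induction xs arbitrary: ys)
  case Nil then show ?case by simp
next
  case (Cons x xs)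
  have "set (x # xs) = set ys" using Cons.prems by (rule mset_eq_setD)
  then have xin: "x \<in> set ys" by auto
  have "mset (remove1 x ys) = mset ys - {#x#}" by (simp add: mset_remove1)
  also have "\<dots> = mset (x # xs) - {#x#}" using Cons.prems by simp
  also have "\<dots> = mset xs" by simp
  finally have m: "mset xs = mset (remove1 x ys)" by simp
  have len0: "length ys = Suc (length xs)" using mset_eq_length[OF Cons.prems] by simp
  show ?case
  proof (cases "xs = []")
    case True
    then have "ys = [x]" using len0 xin
      by (cases ys) auto
    then show ?thesis using True by simp
  next
    case False
    have len: "length ys \<ge> 2" using len0 False
      by (cases xs) auto
    show ?thesis using Cons.IH[OF m] False nsum_remove[OF xin len] by (simp add: nsum_Cons)
  qed
qed

section \<open>Monomials of matrix words\<close>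

lemma sum_list_concat: "sum_list (concat xss) = sum_list (map sum_list (xss :: 'b::monoid_add list list))"
  by (induction xss) auto


fun mons :: "nat \<Rightarrow> nat list \<Rightarrow> nat \<Rightarrow> nat \<Rightarrow> (nat \<times> nat \<times> nat) list list" where
  "mons n [] i j = (if i = j then [[]] else [])"
| "mons n (a # w) i j = concat (map (\<lambda>k. map (\<lambda>m. (a, i, k) # m) (mons n w k j)) [0..<n])"

definition mval :: "(nat \<Rightarrow> 'a::comm_monoid_mult mat) \<Rightarrow> (nat \<times> nat \<times> nat) list \<Rightarrow> 'a" where
  "mval X m = prod_list (map (\<lambda>(a, k, l). X a k l) m)"

lemma mons_ne: "j < n \<Longrightarrow> w \<noteq> [] \<or> i = j \<Longrightarrow> mons n w i j \<noteq> []"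
proof (induction w arbitrary: i)
  case Nil then show ?case by simp
next
  case (Cons a w)
  have "mons n w j j \<noteq> []" using Cons by auto
  moreover have "j \<in> set [0..<n]" using Cons.prems by simp
  ultimately show ?case by auto
qed

lemma mons_single_aux:
  "concat (map (\<lambda>k. map ((#) (a, i, k)) (if k = j then [[]] else [])) [0..<n])
   = (if j < n then [[(a, i, j)]] else [])"
  by (induction n) auto

lemma mons_single: "j < n \<Longrightarrow> mons n [a] i j = [[(a, i, j)]]"
  using mons_single_aux[of a i j n] by simp

lemma imono_mons: "imono n X w i j = sum_list (map (mval X) (mons n w i j))"
proof (induction w arbitrary: i)
  case Nil then show ?case by (simp add: imono_def imat_one_def mval_def)
next
  case (Cons a w)
  have "imono n X (a # w) i j = (\<Sum>k<n. X a i k * imono n X w k j)"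
    by (simp add: imono_def imat_mult_def)
  also have "\<dots> = (\<Sum>k<n. X a i k * sum_list (map (mval X) (mons n w k j)))"
    using Cons by simp
  also have "\<dots> = sum_list (map (\<lambda>k. sum_list (map (mval X) (map ((#) (a, i, k)) (mons n w k j)))) [0..<n])"
    by (simp add: sum_list_const_mult[symmetric] o_def mval_def sum_set_upt_conv_sum_list_nat[symmetric] lessThan_atLeast0)
  also have "\<dots> = sum_list (map (mval X) (mons n (a # w) i j))"
    by (simp only: mons.simps map_concat sum_list_concat map_map o_def)
  finally show ?case .
qed

lemma smono_mons:
  fixes X :: "nat \<Rightarrow> 'a::{comm_semiring, comm_monoid_mult} mat"
  shows "w \<noteq> [] \<Longrightarrow> i < n \<Longrightarrow> j < n \<Longrightarrow> smono n X w i j = nsum (map (mval X) (mons n w i j))"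
proof (induction w arbitrary: i)
  case Nil then show ?case by simp
next
  case (Cons a w)
  show ?case
  proof (cases w)
    case Nil
    then show ?thesis using Cons.prems mons_single_aux[of a i j n] by (simp add: mval_def)
  next
    case (Cons b w')
    have IH: "\<And>k. k < n \<Longrightarrow> smono n X w k j = nsum (map (mval X) (mons n w k j))"
      using Cons.IH Cons.prems Cons by auto
    have ne: "\<And>k. mons n w k j \<noteq> []"
      by (rule mons_ne) (use Cons.prems Cons in auto)
    have "smono n X (a # w) i j = nsum (map (\<lambda>k. X a i k * smono n X w k j) [0..<n])"
      using Cons by (simp add: smat_mult_def)
    also have "\<dots> = nsum (map (\<lambda>k. X a i k * nsum (map (mval X) (mons n w k j))) [0..<n])"
      using IH by (intro arg_cong[where f=nsum] map_cong) auto
    also have "\<dots> = nsum (map (\<lambda>k. nsum (map (mval X) (map ((#) (a, i, k)) (mons n w k j)))) [0..<n])"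
      using ne by (intro arg_cong[where f=nsum] map_cong)
        (auto simp: nsum_mult mval_def o_def)
    also have "\<dots> = nsum (concat (map (\<lambda>k. map (mval X) (map ((#) (a, i, k)) (mons n w k j))) [0..<n]))"
      using ne Cons.prems by (subst nsum_concat) (auto simp: o_def)
    also have "\<dots> = nsum (map (mval X) (mons n (a # w) i j))"
      by (simp add: map_concat o_def)
    finally show ?thesis .
  qed
qed

definition allmons :: "nat \<Rightarrow> (nat list \<Rightarrow> nat) \<Rightarrow> nat \<Rightarrow> nat \<Rightarrow> (nat \<times> nat \<times> nat) list list" where
  "allmons n q i j = concat (map (\<lambda>w. concat (replicate (q w) (mons n w i j))) (sorted_list_of_set {w. q w \<noteq> 0}))"

lemma nsum_replicate_concat:
  "c \<noteq> 0 \<Longrightarrow> L \<noteq> [] \<Longrightarrow> nsum (replicate c (nsum L)) = nsum (concat (replicate c L))"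
  by (subst nsum_concat) (auto simp: map_replicate)

lemma seval_allmons:
  fixes X :: "nat \<Rightarrow> 'a::{comm_semiring, comm_monoid_mult} mat"
  assumes fin: "finite {w. q w \<noteq> 0}" and nz: "\<forall>w. q w \<noteq> 0 \<longrightarrow> w \<noteq> []"
    and ij: "i < n" "j < n"
  shows "seval n q X i j = nsum (map (mval X) (allmons n q i j))"
proof -
  define ws where "ws = sorted_list_of_set {w. q w \<noteq> 0}"
  have wsset: "\<And>w. w \<in> set ws \<longleftrightarrow> q w \<noteq> 0" using fin by (simp add: ws_def)
  have ne: "\<And>w. w \<in> set ws \<Longrightarrow> mons n w i j \<noteq> []"
    using mons_ne ij nz wsset by auto
  show ?thesis
  proof (cases "ws = []")
    case True then show ?thesis unfolding seval_def allmons_def ws_def[symmetric] by simp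
  next
    case False
    have "seval n q X i j = nsum (map (\<lambda>w. nsum (concat (replicate (q w) (map (mval X) (mons n w i j))))) ws)"
      unfolding seval_def ws_def[symmetric]
      apply (intro arg_cong[where f=nsum] map_cong refl)
      using ne wsset nz ij
      by (auto simp: smat_nat_smult_def smono_mons nsum_replicate_concat)
    also have "\<dots> = nsum (concat (map (\<lambda>w. concat (replicate (q w) (map (mval X) (mons n w i j)))) ws))"
      using False ne wsset by (subst nsum_concat) (auto simp: o_def)
    also have "\<dots> = nsum (map (mval X) (allmons n q i j))"
      by (simp add: allmons_def ws_def map_concat o_def)
    finally show ?thesis .
  qed
qed

lemma sum_list_concat_replicate:
  "sum_list (concat (replicate c L)) = of_nat c * (sum_list L :: 'b::semiring_1)"
  by (induction c) (auto simp: distrib_right)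

lemma int_allmons:
  assumes fin: "finite {w. q w \<noteq> 0}"
  shows "sum_list (map (mval X) (allmons n q i j)) = (\<Sum>w\<in>{w. q w \<noteq> 0}. int (q w) * imono n X w i j)"
proof -
  have "sum_list (map (mval X) (allmons n q i j))
      = sum_list (map (\<lambda>w. int (q w) * imono n X w i j) (sorted_list_of_set {w. q w \<noteq> 0}))"
    by (simp add: allmons_def map_concat sum_list_concat o_def imono_mons
         sum_list_concat_replicate sum_list_replicate)
  then show ?thesis
    using fin by (simp add: sum_list_distinct_conv_sum_set)
qed

section \<open>Linear independence of commutative monomials over the integers\<close>

definition mv :: "('v \<Rightarrow> 'b::comm_monoid_mult) \<Rightarrow> 'v multiset \<Rightarrow> 'b" where
  "mv v M = prod_mset (image_mset v M)"

lemma sum_mset_count: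
  fixes h :: "'v \<Rightarrow> 'b::comm_semiring_1"
  assumes "finite T"
  shows "set_mset A \<subseteq> T \<Longrightarrow> sum_mset (image_mset h A) = (\<Sum>x\<in>T. of_nat (count A x) * h x)"
proof (induction A)
  case empty then show ?case by simp
next
  case (add a A)
  then have aT: "a \<in> T" by auto
  have "(\<Sum>x\<in>T. of_nat (count (add_mset a A) x) * h x)
      = (\<Sum>x\<in>T. of_nat (count A x) * h x) + (\<Sum>x\<in>T. if x = a then h x else 0)"
  proof -
    have "\<And>x. of_nat (count (add_mset a A) x) * h x = of_nat (count A x) * h x + (if x = a then h x else 0)"
      by (simp add: distrib_right add.commute)
    then show ?thesis by (simp add: sum.distrib)
  qed
  also have "(\<Sum>x\<in>T. if x = a then h x else 0) = h a" using aT assms by simp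
  finally show ?case using add by (simp add: add.commute)
qed

lemma lin_indep:
  fixes c :: "'v multiset \<Rightarrow> int"
  assumes "finite S"
  shows "finite T \<Longrightarrow> \<forall>M\<in>T. set_mset M \<subseteq> S \<Longrightarrow>
         \<forall>v. (\<Sum>M\<in>T. c M * mv v M) = 0 \<Longrightarrow> M0 \<in> T \<Longrightarrow> c M0 = 0"
  using assms
proof (induction S arbitrary: T c M0 rule: finite_induct)
  case empty
  then have "T = {{#}}" "M0 = {#}" by auto
  then show ?case using empty by (simp add: mv_def)
next
  case (insert x S)
  define rest where "rest M = filter_mset (\<lambda>y. y \<noteq> x) M" for M
  define d where "d = count M0 x"
  define Td where "Td = {M\<in>T. count M x = d}"
  define c' where "c' M' = c (M' + replicate_mset d x)" for M'
  have decomp: "rest M + replicate_mset (count M x) x = M" for M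
    by (auto simp: rest_def multiset_eq_iff)
  have xr: "x \<notin># rest M" for M by (simp add: rest_def)
  have inj: "inj_on rest Td"
  proof (rule inj_onI)
    fix M N assume MN: "M \<in> Td" "N \<in> Td" "rest M = rest N"
    then have "count M x = count N x" by (simp add: Td_def)
    then show "M = N" using decomp[of M] decomp[of N] MN(3) by metis
  qed
  have cM: "c' (rest M) = c M" if "M \<in> Td" for M
  proof -
    have "count M x = d" using that by (simp add: Td_def)
    then have "rest M + replicate_mset d x = M" using decomp[of M] by simp
    then show ?thesis by (simp add: c'_def)
  qed
  have finTd: "finite Td" using insert.prems by (simp add: Td_def)
  have key: "\<forall>v. (\<Sum>M'\<in>rest ` Td. c' M' * mv v M') = 0"
  proof
    fix v
    define Q where "Q = (\<Sum>M\<in>T. monom (c M * mv v (rest M)) (count M x))"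
    have "poly Q t = 0" for t
    proof -
      have e: "mv (v(x:=t)) M = mv v (rest M) * t ^ count M x" for M
      proof -
        have "image_mset (v(x:=t)) (rest M) = image_mset v (rest M)"
          using xr[of M] by (intro image_mset_cong) auto
        then have "mv (v(x:=t)) (rest M) = mv v (rest M)" by (simp add: mv_def)
        moreover have "mv (v(x:=t)) (rest M + replicate_mset (count M x) x) = mv (v(x:=t)) (rest M) * t ^ count M x"
          by (simp add: mv_def)
        ultimately show ?thesis using decomp[of M] by simp
      qed
      have "poly Q t = (\<Sum>M\<in>T. c M * mv (v(x:=t)) M)"
        by (simp add: Q_def poly_sum poly_monom e mult.assoc)
      then show ?thesis using insert.prems by simp
    qed
    then have "Q = 0" using poly_all_0_iff_0 by blast
    then have "coeff Q d = 0" by simp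
    then have "(\<Sum>M\<in>T. if count M x = d then c M * mv v (rest M) else 0) = 0"
      by (simp add: Q_def coeff_sum coeff_monom)
    then have z: "(\<Sum>M\<in>Td. c M * mv v (rest M)) = 0"
      using insert.prems by (simp add: Td_def sum.inter_filter)
    have "(\<Sum>M'\<in>rest ` Td. c' M' * mv v M') = (\<Sum>M\<in>Td. c' (rest M) * mv v (rest M))"
      by (simp add: sum.reindex[OF inj])
    also have "\<dots> = (\<Sum>M\<in>Td. c M * mv v (rest M))"
      by (intro sum.cong refl) (simp add: cM)
    finally show "(\<Sum>M'\<in>rest ` Td. c' M' * mv v M') = 0" using z by simp
  qed
  have sub: "\<forall>M\<in>rest ` Td. set_mset M \<subseteq> S"
    using insert.prems(2) by (auto simp: Td_def rest_def)
  have "M0 \<in> Td" using insert.prems by (simp add: Td_def d_def)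
  then have "c' (rest M0) = 0"
    using insert.IH[OF _ sub key] finTd by blast
  then show ?case using decomp[of M0] by (simp add: c'_def d_def)
qed

lemma mset_eq_from_eval:
  fixes A B :: "'v multiset multiset"
  assumes "\<forall>v::'v \<Rightarrow> int. sum_mset (image_mset (mv v) A) = sum_mset (image_mset (mv v) B)"
  shows "A = B"
proof -
  define T where "T = set_mset A \<union> set_mset B"
  define S where "S = \<Union> (set_mset ` T)"
  define c where "c M = int (count A M) - int (count B M)" for M
  have fT: "finite T" by (simp add: T_def)
  have fS: "finite S" using fT by (simp add: S_def)
  have sums: "\<forall>v. (\<Sum>M\<in>T. c M * mv v M) = 0"
  proof
    fix v
    have "sum_mset (image_mset (mv v) A) = (\<Sum>M\<in>T. int (count A M) * mv v M)"
      using sum_mset_count[OF fT, of A "mv v"] by (simp add: T_def)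
    moreover have "sum_mset (image_mset (mv v) B) = (\<Sum>M\<in>T. int (count B M) * mv v M)"
      using sum_mset_count[OF fT, of B "mv v"] by (simp add: T_def)
    ultimately show "(\<Sum>M\<in>T. c M * mv v M) = 0"
      using assms by (simp add: c_def left_diff_distrib sum_subtractf)
  qed
  have "c M = 0" if "M \<in> T" for M
    using lin_indep[OF fS fT _ sums that] by (auto simp: S_def)
  then have "count A M = count B M" for M
    by (cases "M \<in> T") (auto simp: c_def T_def not_in_iff)
  then show ?thesis by (simp add: multiset_eq_iff)
qed

lemma mval_mv: "mval X m = mv (\<lambda>(a, k, l). X a k l) (mset m)"
  by (simp add: mval_def mv_def prod_mset_prod_list[symmetric])

lemma mset_map_mval: "mset (map (mval X) L) = image_mset (mv (\<lambda>(a, k, l). X a k l)) (mset (map mset L))"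
  by (induction L) (auto simp: mval_mv)

theorem corollary5p5:
  fixes m n :: nat and p :: "nat list \<Rightarrow> int"
  assumes "is_PI_Mn_Z m n p"
  shows "is_sPI_Mn n (pos_part p) (neg_part p) TYPE('a::{comm_semiring, comm_monoid_mult})"
  unfolding is_sPI_Mn_def mat_eq_def
proof (intro allI impI)
  fix X :: "nat \<Rightarrow> 'a mat" and i j
  assume ij: "i < n" "j < n"
  define f where "f = pos_part p"
  define g where "g = neg_part p"
  have finp: "finite {w. p w \<noteq> 0}" using assms by (simp add: is_PI_Mn_Z_def is_poly_def)
  have PI: "\<And>Y i j. i < n \<Longrightarrow> j < n \<Longrightarrow> ieval n p Y i j = 0"
    using assms by (simp add: is_PI_Mn_Z_def mat_eq_def)
  have z: "imono n (\<lambda>_ _ _. 0) w = (if w = [] then imat_one else (\<lambda>_ _. 0))" for w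
    by (cases w) (auto simp: imono_def imat_mult_def)
  have "ieval n p (\<lambda>_ _ _. 0) 0 0 = (\<Sum>w\<in>{w. p w \<noteq> 0}. if w = [] then p w else 0)"
    unfolding ieval_def z by (intro sum.cong refl) (auto simp: imat_one_def)
  also have "\<dots> = p []" using finp by (simp add: sum.delta)
  finally have p0: "p [] = 0" using PI[of 0 0] ij by simp
  have supf: "{w. f w \<noteq> 0} \<subseteq> {w. p w \<noteq> 0}" "{w. g w \<noteq> 0} \<subseteq> {w. p w \<noteq> 0}"
    by (auto simp: f_def g_def pos_part_def neg_part_def)
  have finf: "finite {w. f w \<noteq> 0}" and fing: "finite {w. g w \<noteq> 0}"
    using supf finp finite_subset by blast+
  have nzf: "\<forall>w. f w \<noteq> 0 \<longrightarrow> w \<noteq> []" and nzg: "\<forall>w. g w \<noteq> 0 \<longrightarrow> w \<noteq> []"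
    using p0 by (auto simp: f_def g_def pos_part_def neg_part_def)
  have ieq: "sum_list (map (mval Y) (allmons n f i j)) = sum_list (map (mval Y) (allmons n g i j))"
    for Y :: "nat \<Rightarrow> int mat"
  proof -
    define I where "I w = imono n Y w i j" for w
    have fg: "int (f w) - int (g w) = p w" for w
      by (simp add: f_def g_def pos_part_def neg_part_def)
    have e1: "sum_list (map (mval Y) (allmons n f i j)) = (\<Sum>w\<in>{w. p w \<noteq> 0}. int (f w) * I w)"
    proof -
      have "sum_list (map (mval Y) (allmons n f i j)) = (\<Sum>w\<in>{w. f w \<noteq> 0}. int (f w) * I w)"
        using int_allmons[OF finf] by (simp add: I_def)
      also have "\<dots> = (\<Sum>w\<in>{w. p w \<noteq> 0}. int (f w) * I w)"
        by (rule sum.mono_neutral_left[OF finp supf(1)]) simp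
      finally show ?thesis .
    qed
    have e2: "sum_list (map (mval Y) (allmons n g i j)) = (\<Sum>w\<in>{w. p w \<noteq> 0}. int (g w) * I w)"
    proof -
      have "sum_list (map (mval Y) (allmons n g i j)) = (\<Sum>w\<in>{w. g w \<noteq> 0}. int (g w) * I w)"
        using int_allmons[OF fing] by (simp add: I_def)
      also have "\<dots> = (\<Sum>w\<in>{w. p w \<noteq> 0}. int (g w) * I w)"
        by (rule sum.mono_neutral_left[OF finp supf(2)]) simp
      finally show ?thesis .
    qed
    have "(\<Sum>w\<in>{w. p w \<noteq> 0}. int (f w) * I w) - (\<Sum>w\<in>{w. p w \<noteq> 0}. int (g w) * I w)
        = (\<Sum>w\<in>{w. p w \<noteq> 0}. (int (f w) - int (g w)) * I w)"
      by (simp only: sum_subtractf[symmetric] left_diff_distrib)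
    also have "\<dots> = ieval n p Y i j"
      by (simp only: fg ieval_def I_def)
    also have "\<dots> = 0" using PI[OF ij] .
    finally show ?thesis using e1 e2 by simp
  qed
  have AB: "mset (map mset (allmons n f i j)) = mset (map mset (allmons n g i j))"
  proof (rule mset_eq_from_eval, rule allI)
    fix v :: "nat \<times> nat \<times> nat \<Rightarrow> int"
    define Y where "Y = (\<lambda>a k l. v (a, k, l))"
    have vY: "(\<lambda>(a, k, l). Y a k l) = v" by (auto simp: Y_def)
    have "sum_mset (mset (map (mval Y) (allmons n f i j))) = sum_mset (mset (map (mval Y) (allmons n g i j)))"
      by (simp only: sum_mset_sum_list ieq)
    then show "sum_mset (image_mset (mv v) (mset (map mset (allmons n f i j)))) =
               sum_mset (image_mset (mv v) (mset (map mset (allmons n g i j))))"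
      by (simp only: mset_map_mval vY)
  qed
  have "seval n f X i j = nsum (map (mval X) (allmons n f i j))"
    by (rule seval_allmons[OF finf nzf ij])
  also have "\<dots> = nsum (map (mval X) (allmons n g i j))"
    by (rule nsum_perm) (simp only: mset_map_mval AB)
  also have "\<dots> = seval n g X i j"
    by (rule seval_allmons[OF fing nzg ij, symmetric])
  finally show "seval n (pos_part p) X i j = seval n (neg_part p) X i j"
    by (simp add: f_def g_def)
qed

end
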